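(* Let $(\boldsymbol\Sigma,\sigma)$ be a primitive Markov subshift on a countable alphabet. Suppose $u\in C^0(\boldsymbol\Sigma)$ is a bounded sub-action for a bounded above and coercive potential $A\in C^0(\boldsymbol\Sigma)$. If $\mu\in\mathcal M_\sigma$ is an $A$-maximizing probability, then $\mu$ is supported in a Markov subshift on a finite alphabet, i.e. there exists an integer $I\ge0$ with $\operatorname{supp}\mu\subseteq\Sigma_I$.
   Context: Let $\mathbf M:\mathbb Z_+\times\mathbb Z_+\to\{0,1\}$ be a transition matrix. Put $\mathcal B_0=\{i:\mathbf M(i,j)=1\text{ for some }j\}$, $\mathcal B_n=\{i:\mathbf M(i,j)=1\text{ for some }j\in\mathcal B_{n-1}\}$. $\mathbf M$ is primitive if there exist $\mathbb F\subseteq\mathbb Z_+$ and an integer $K_0\ge0$ such that for all $i,j\in\bigcap_{n\ge0}\mathcal B_n$ there are $\ell_1,\dots,\ell_{K_0}\in\mathbb F$ with $\mathbf M(i,\ell_1)\mathbf M(\ell_1,\ell_2)\cdots\mathbf M(\ell_{K_0},j)=1$. $\boldsymbol\Sigma=\{\mathbf x\in\mathbb Z_+^{\mathbb Z_+}:\mathbf M(x_j,x_{j+1})=1\ \forall j\}$ with metric $d(\mathbf x,\mathbf y)=\lambda^{\min\{j:x_j\neq y_j\}}$, $\lambda\in(0,1)$ fixed; $\sigma$ the left shift; $[i]=\{\mathbf x:x_0=i\}$. $\mathcal M_\sigma$ = $\sigma$-invariant Borel probabilities; $\beta_A=\sup_{\mu\in\mathcal M_\sigma}\int A\,d\mu$;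 $\mu$ is $A$-maximizing if $\int A\,d\mu=\beta_A$. A sub-action for $A$ is a continuous $u$ with $A+u-u\circ\sigma\le\beta_A$ everywhere. $A$ is coercive if $\lim_{i\to+\infty}\sup A|_{[i]}=-\infty$. For an integer $I\ge0$, $\Sigma_I=\{\mathbf x\in\{0,\dots,I\}^{\mathbb Z_+}:\mathbf M(x_j,x_{j+1})=1\ \forall j\}$. *)

theory Defs
  imports "HOL-Probability.Probability"
begin

(* Transition matrices M : Z_+ x Z_+ -> {0,1}, encoded as boolean relations
   (M i j = True  iff  M(i,j) = 1).  Z_+ = {0,1,2,...} = nat. *)

fun Bset :: "(nat \<Rightarrow> nat \<Rightarrow> bool) \<Rightarrow> nat \<Rightarrow> nat set" where
  "Bset M 0 = {i. \<exists>j. M i j}"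
| "Bset M (Suc n) = {i. \<exists>j\<in>Bset M n. M i j}"

definition primitive :: "(nat \<Rightarrow> nat \<Rightarrow> bool) \<Rightarrow> bool" where
  "primitive M \<longleftrightarrow> (\<exists>(F::nat set) (K0::nat).
     \<forall>i\<in>(\<Inter>n. Bset M n). \<forall>j\<in>(\<Inter>n. Bset M n).
       \<exists>l::nat \<Rightarrow> nat. l 0 = i \<and> l (Suc K0) = j \<and>
          (\<forall>k\<in>{1..K0}. l k \<in> F) \<and> (\<forall>k\<le>K0. M (l k) (l (Suc k))))"

definition Sigma_M :: "(nat \<Rightarrow> nat \<Rightarrow> bool) \<Rightarrow> (nat \<Rightarrow> nat) set" where
  "Sigma_M M = {x. \<forall>j. M (x j) (x (Suc j))}"

definition Sigma_I :: "(nat \<Rightarrow> nat \<Rightarrow> bool) \<Rightarrow> nat \<Rightarrow> (nat \<Rightarrow> nat) set" where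
  "Sigma_I M I = {x. (\<forall>j. x j \<le> I) \<and> (\<forall>j. M (x j) (x (Suc j)))}"

definition shift :: "(nat \<Rightarrow> nat) \<Rightarrow> (nat \<Rightarrow> nat)" where
  "shift x = (\<lambda>j. x (Suc j))"

definition dist_sh :: "real \<Rightarrow> (nat \<Rightarrow> nat) \<Rightarrow> (nat \<Rightarrow> nat) \<Rightarrow> real" where
  "dist_sh lam x y = (if x = y then 0 else lam ^ (LEAST j. x j \<noteq> y j))"

definition cont_on_sh :: "real \<Rightarrow> (nat \<Rightarrow> nat) set \<Rightarrow> ((nat \<Rightarrow> nat) \<Rightarrow> real) \<Rightarrow> bool" where
  "cont_on_sh lam S f \<longleftrightarrow> (\<forall>x\<in>S. \<forall>e>0. \<exists>r>0. \<forall>y\<in>S. dist_sh lam x y < r \<longrightarrow> \<bar>f y - f x\<bar> < e)"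

definition open_sh :: "real \<Rightarrow> (nat \<Rightarrow> nat) set \<Rightarrow> (nat \<Rightarrow> nat) set set" where
  "open_sh lam S = {U. U \<subseteq> S \<and> (\<forall>x\<in>U. \<exists>r>0. \<forall>y\<in>S. dist_sh lam x y < r \<longrightarrow> y \<in> U)}"

definition borel_sh :: "real \<Rightarrow> (nat \<Rightarrow> nat) set \<Rightarrow> (nat \<Rightarrow> nat) set set" where
  "borel_sh lam S = sigma_sets S (open_sh lam S)"

definition invariant_probs :: "real \<Rightarrow> (nat \<Rightarrow> nat \<Rightarrow> bool) \<Rightarrow> (nat \<Rightarrow> nat) measure set" where
  "invariant_probs lam M = {mu. prob_space mu \<and> space mu = Sigma_M M \<and>
      sets mu = borel_sh lam (Sigma_M M) \<and> shift \<in> measurable mu mu \<and>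
      (\<forall>B\<in>sets mu. emeasure mu (shift -` B \<inter> space mu) = emeasure mu B)}"

(* integral of a function that is bounded above, valued in [-\<infinity>, \<infinity>) *)
definition int_ext :: "(nat \<Rightarrow> nat) measure \<Rightarrow> ((nat \<Rightarrow> nat) \<Rightarrow> real) \<Rightarrow> ereal" where
  "int_ext mu A = enn2ereal (\<integral>\<^sup>+ x. ennreal (A x) \<partial>mu) - enn2ereal (\<integral>\<^sup>+ x. ennreal (- A x) \<partial>mu)"

definition beta :: "real \<Rightarrow> (nat \<Rightarrow> nat \<Rightarrow> bool) \<Rightarrow> ((nat \<Rightarrow> nat) \<Rightarrow> real) \<Rightarrow> ereal" where
  "beta lam M A = (SUP mu \<in> invariant_probs lam M. int_ext mu A)"

definition maximizing :: "real \<Rightarrow> (nat \<Rightarrow> nat \<Rightarrow> bool) \<Rightarrow> ((nat \<Rightarrow> nat) \<Rightarrow> real) \<Rightarrow> (nat \<Rightarrow> nat) measure \<Rightarrow> bool" where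
  "maximizing lam M A mu \<longleftrightarrow> mu \<in> invariant_probs lam M \<and> int_ext mu A = beta lam M A"

definition sub_action :: "real \<Rightarrow> (nat \<Rightarrow> nat \<Rightarrow> bool) \<Rightarrow> ((nat \<Rightarrow> nat) \<Rightarrow> real) \<Rightarrow> ((nat \<Rightarrow> nat) \<Rightarrow> real) \<Rightarrow> bool" where
  "sub_action lam M A u \<longleftrightarrow> cont_on_sh lam (Sigma_M M) u \<and>
     (\<forall>x\<in>Sigma_M M. ereal (A x + u x - u (shift x)) \<le> beta lam M A)"

definition coercive :: "(nat \<Rightarrow> nat \<Rightarrow> bool) \<Rightarrow> ((nat \<Rightarrow> nat) \<Rightarrow> real) \<Rightarrow> bool" where
  "coercive M A \<longleftrightarrow> (\<forall>C::real. \<exists>N. \<forall>i\<ge>N. \<forall>x\<in>Sigma_M M. x 0 = i \<longrightarrow> A x \<le> C)"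

definition supp_sh :: "real \<Rightarrow> (nat \<Rightarrow> nat) measure \<Rightarrow> (nat \<Rightarrow> nat) set" where
  "supp_sh lam mu = {x\<in>space mu. \<forall>r>0. emeasure mu {y\<in>space mu. dist_sh lam x y < r} > 0}"

end

theory Submission
  imports Defs
begin

lemma ball_agree:
  assumes "0 < lam" "lam < 1" "dist_sh lam x y < lam ^ j" "k \<le> j"
  shows "y k = x k"
proof (cases "x = y")
  case True then show ?thesis by simp
next
  case False
  then have "lam ^ (LEAST i. x i \<noteq> y i) < lam ^ j" using assms(3) by (simp add: dist_sh_def)
  then have "j < (LEAST i. x i \<noteq> y i)" using assms(1,2) by (simp add: power_strict_decreasing_iff)
  then have "k < (LEAST i. x i \<noteq> y i)" using assms(4) by simp
  then show ?thesis using not_less_Least by fastforce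
qed

lemma coord_open:
  assumes "0 < lam" "lam < 1"
  shows "{x\<in>S. N < x j} \<in> open_sh lam S"
  unfolding open_sh_def
proof (safe)
  fix x assume "x \<in> S" "N < x j"
  show "\<exists>r>0. \<forall>y\<in>S. dist_sh lam x y < r \<longrightarrow> y \<in> {x \<in> S. N < x j}"
    using ball_agree[OF assms, of x _ j j] \<open>N < x j\<close> assms
    by (intro exI[of _ "lam ^ j"]) auto
qed

lemma cont_open:
  assumes "cont_on_sh lam S f"
  shows "{x\<in>S. a < f x} \<in> open_sh lam S"
  unfolding open_sh_def
proof (safe)
  fix x assume x: "x \<in> S" "a < f x"
  then obtain r where "r > 0" "\<forall>y\<in>S. dist_sh lam x y < r \<longrightarrow> \<bar>f y - f x\<bar> < f x - a"
    using assms unfolding cont_on_sh_def by (meson diff_gt_0_iff_gt)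
  then show "\<exists>r>0. \<forall>y\<in>S. dist_sh lam x y < r \<longrightarrow> y \<in> {x \<in> S. a < f x}"
    by (intro exI[of _ r]) fastforce
qed

lemma cont_meas:
  assumes "cont_on_sh lam S f" "space mu = S" "sets mu = borel_sh lam S"
  shows "f \<in> borel_measurable mu"
proof (rule borel_measurableI_greater)
  fix a
  show "{x \<in> space mu. a < f x} \<in> sets mu"
    using cont_open[OF assms(1), of a] assms(2,3) unfolding borel_sh_def
    by (auto intro: sigma_sets.Basic)
qed

theorem mainTheorem7:
  fixes lam :: real and M :: "nat \<Rightarrow> nat \<Rightarrow> bool"
    and A u :: "(nat \<Rightarrow> nat) \<Rightarrow> real" and mu :: "(nat \<Rightarrow> nat) measure"
  assumes "0 < lam" "lam < 1"
    and "primitive M"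
    and "cont_on_sh lam (Sigma_M M) A"
    and "\<exists>C. \<forall>x\<in>Sigma_M M. A x \<le> C"
    and "coercive M A"
    and "sub_action lam M A u"
    and "\<exists>C. \<forall>x\<in>Sigma_M M. \<bar>u x\<bar> \<le> C"
    and "maximizing lam M A mu"
  shows "\<exists>I::nat. supp_sh lam mu \<subseteq> Sigma_I M I"
proof -
  let ?S = "Sigma_M M"
  have inv: "mu \<in> invariant_probs lam M" and intA: "int_ext mu A = beta lam M A"
    using assms(9) unfolding maximizing_def by auto
  have ps: "prob_space mu" and sp: "space mu = ?S" and st: "sets mu = borel_sh lam ?S"
    and shm: "shift \<in> measurable mu mu"
    and shinv: "\<And>B. B \<in> sets mu \<Longrightarrow> emeasure mu (shift -` B \<inter> space mu) = emeasure mu B"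
    using inv unfolding invariant_probs_def by auto
  interpret prob_space mu by (rule ps)
  obtain CA where CA: "\<forall>x\<in>?S. A x \<le> CA" using assms(5) by blast
  obtain Cu where Cu: "\<forall>x\<in>?S. \<bar>u x\<bar> \<le> Cu" using assms(8) by blast
  have ucont: "cont_on_sh lam ?S u" and sub: "\<forall>x\<in>?S. ereal (A x + u x - u (shift x)) \<le> beta lam M A"
    using assms(7) unfolding sub_action_def by auto
  have Am[measurable]: "A \<in> borel_measurable mu" by (rule cont_meas[OF assms(4) sp st])
  have um[measurable]: "u \<in> borel_measurable mu" by (rule cont_meas[OF ucont sp st])
  have shm'[measurable]: "shift \<in> measurable mu mu" by (rule shm)
  define P where "P = (\<integral>\<^sup>+ x. ennreal (A x) \<partial>mu)"
  define Q where "Q = (\<integral>\<^sup>+ x. ennreal (- A x) \<partial>mu)"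
  have "P \<le> (\<integral>\<^sup>+ x. ennreal (max CA 0) \<partial>mu)"
    unfolding P_def
  proof (rule nn_integral_mono)
    fix x assume "x \<in> space mu"
    then have "A x \<le> max CA 0" using CA sp by fastforce
    then show "ennreal (A x) \<le> ennreal (max CA 0)" by (rule ennreal_leI)
  qed
  also have "\<dots> = ennreal (max CA 0)" by (simp add: emeasure_space_1)
  finally have "P \<le> ennreal (max CA 0)" .
  then have "P < top" by (rule le_less_trans[OF _ ennreal_less_top])
  then have Pfin: "P \<noteq> \<infinity>" by simp
  obtain x0 where x0: "x0 \<in> ?S" using not_empty sp by auto
  have bgt: "beta lam M A \<noteq> -\<infinity>" proof
    assume "beta lam M A = -\<infinity>"
    moreover have "ereal (A x0 + u x0 - u (shift x0)) \<le> beta lam M A" using sub x0 by blast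
    ultimately show False by simp
  qed
  have Qfin: "Q \<noteq> \<infinity>"
  proof
    assume "Q = \<infinity>"
    moreover obtain p where "0 \<le> p" "P = ennreal p" using Pfin by (cases P) auto
    ultimately have "int_ext mu A = -\<infinity>" unfolding int_ext_def P_def[symmetric] Q_def[symmetric]
      by (simp add: enn2ereal_ennreal)
    then show False using intA bgt by simp
  qed
  have Aint: "integrable mu A" using Pfin Qfin unfolding real_integrable_def P_def Q_def by auto
  define b where "b = integral\<^sup>L mu A"
  have beq: "beta lam M A = ereal b"
    using intA Pfin Qfin unfolding int_ext_def P_def[symmetric] Q_def[symmetric] b_def
      real_lebesgue_integral_def[OF Aint]
  proof -
    obtain p where p: "0 \<le> p" "P = ennreal p" using Pfin by (cases P) auto
    obtain q where q: "0 \<le> q" "Q = ennreal q" using Qfin by (cases Q) auto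
    show "enn2ereal P - enn2ereal Q = beta lam M A \<Longrightarrow> beta lam M A = ereal (enn2real P - enn2real Q)"
      using p q by simp
  qed
  have sub': "\<And>x. x \<in> space mu \<Longrightarrow> A x + u x - u (shift x) \<le> b" using sub beq sp by auto
  have shsp: "\<And>x. x \<in> space mu \<Longrightarrow> shift x \<in> space mu" using shm by (rule measurable_space)
  have uint: "integrable mu u"
    by (rule integrable_const_bound[where B=Cu]) (use Cu sp in \<open>auto intro!: AE_I2\<close>)
  have ushint: "integrable mu (\<lambda>x. u (shift x))"
  proof (rule integrable_const_bound[where B=Cu])
    show "AE x in mu. norm (u (shift x)) \<le> Cu"
      using Cu sp shsp by (intro AE_I2) auto
  qed simp
  have dist: "distr mu mu shift = mu"
  proof (rule measure_eqI)
    show "sets (distr mu mu shift) = sets mu" by simp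
    fix B assume "B \<in> sets (distr mu mu shift)"
    then have B: "B \<in> sets mu" by simp
    show "emeasure (distr mu mu shift) B = emeasure mu B"
      using emeasure_distr[OF shm B] shinv[OF B] by simp
  qed
  have ush: "integral\<^sup>L mu (\<lambda>x. u (shift x)) = integral\<^sup>L mu u"
    using integral_distr[OF shm um] dist by simp
  define g where "g = (\<lambda>x. b - A x - u x + u (shift x))"
  have gint: "integrable mu g" unfolding g_def using Aint uint ushint by auto
  have "integral\<^sup>L mu g = integral\<^sup>L mu (\<lambda>x. b) - integral\<^sup>L mu A - integral\<^sup>L mu u + integral\<^sup>L mu (\<lambda>x. u (shift x))"
    unfolding g_def using Aint uint ushint by simp
  also have "\<dots> = 0" using ush b_def by (simp add: prob_space)
  finally have g0: "integral\<^sup>L mu g = 0" .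
  have "AE x in mu. 0 \<le> g x" by (intro AE_I2) (use sub' in \<open>fastforce simp: g_def\<close>)
  then have AEg: "AE x in mu. g x = 0" using integral_nonneg_eq_0_iff_AE[OF gint] g0 by simp
  obtain N where N: "\<forall>i\<ge>N. \<forall>x\<in>?S. x 0 = i \<longrightarrow> A x \<le> b - 2 * Cu - 1"
    using assms(6) unfolding coercive_def by blast
  define Sj where "Sj j = {x\<in>space mu. N < x j}" for j
  have Sjm: "Sj j \<in> sets mu" for j
    using coord_open[OF assms(1,2), of ?S N j] sp st unfolding Sj_def borel_sh_def
    by (auto intro: sigma_sets.Basic)
  have "AE x in mu. \<not> N < x 0"
    using AEg AE_space
  proof eventually_elim
    case (elim x)
    show ?case
    proof
      assume "N < x 0"
      then have "A x \<le> b - 2 * Cu - 1" using N elim sp by (metis less_imp_le_nat)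
      moreover have "\<bar>u x\<bar> \<le> Cu" "\<bar>u (shift x)\<bar> \<le> Cu" using Cu sp shsp elim by auto
      ultimately have "g x > 0" unfolding g_def by linarith
      then show False using elim(1) by simp
    qed
  qed
  then have S0: "emeasure mu (Sj 0) = 0"
    using AE_iff_measurable[OF Sjm[of 0], of "\<lambda>x. \<not> N < x 0"] unfolding Sj_def by simp
  have pre: "shift -` Sj j \<inter> space mu = Sj (Suc j)" for j
    using shsp unfolding Sj_def by (auto simp: shift_def)
  have Sz: "emeasure mu (Sj j) = 0" for j
  proof (induction j)
    case 0 then show ?case by (rule S0)
  next
    case (Suc j) then show ?case using shinv[OF Sjm[of j]] pre[of j] by simp
  qed
  show ?thesis
  proof (intro exI subsetI)
    fix x assume x: "x \<in> supp_sh lam mu"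
    then have xs: "x \<in> space mu" and pos: "\<And>r. r > 0 \<Longrightarrow> emeasure mu {y\<in>space mu. dist_sh lam x y < r} > 0"
      unfolding supp_sh_def by auto
    have "x j \<le> N" for j
    proof (rule ccontr)
      assume "\<not> x j \<le> N"
      then have "{y\<in>space mu. dist_sh lam x y < lam ^ j} \<subseteq> Sj j"
        unfolding Sj_def using ball_agree[OF assms(1,2), of x _ j j] by auto
      then have "emeasure mu {y\<in>space mu. dist_sh lam x y < lam ^ j} \<le> emeasure mu (Sj j)"
        by (rule emeasure_mono) (rule Sjm)
      then show False using pos[of "lam ^ j"] Sz[of j] assms(1) by simp
    qed
    then show "x \<in> Sigma_I M N" using xs sp unfolding Sigma_I_def Sigma_M_def by auto
  qed
qed

end
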